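(* Fix an integer $M\ge2$ and constants $T_s,L_{s,d},L_{s,r},L_{r,d}>0$, $\delta\in(0,1]$, $\alpha\in(0,1)$. Put $g_{s,d}=\sin^2(\pi/M)T_sL_{s,d}$, $g_{r,d}=\sin^2(\pi/M)T_sL_{s,r}L_{r,d}$. For $\bar\gamma>0$ set $\bar\gamma_{s,r}=\bar\gamma_{s,d}=\bar\gamma_{r,d}=P_s/N_0=\bar\gamma$, $\bar\gamma^{ID}_{s,r}=T_sL_{s,r}\bar\gamma$, $$\epsilon=\frac{1}{2(1+\bar\gamma^{ID}_{s,r})}\ (M=2),\qquad \epsilon=1.03\sqrt{\tfrac{1+\cos\frac{\pi}{M}}{2\cos\frac{\pi}{M}}}\Big[1-\sqrt{\tfrac{(1-\cos\frac{\pi}{M})\bar\gamma^{ID}_{s,r}}{1+(1-\cos\frac{\pi}{M})\bar\gamma^{ID}_{s,r}}}\Big]\ (M>2),$$ and $\eta=\ln\frac{(1-\epsilon)(M-1)}{\epsilon}$. Define $$a_1=\frac{\sqrt\pi\,(2g_{s,d})^{-1/4}}{4\bar\gamma}\Big(\frac{g_{s,d}}2+\bar\gamma^{-1}\Big)^{-3/4},\quad b_1=\frac14+\frac{\sqrt{g_{s,d}/2+\bar\gamma^{-1}}}{2\sqrt{2g_{s,d}}},$$ $$a_2=\frac{2\bar\gamma}{\delta g_{r,d}(g_{s,d}\bar\gamma+2)\bar\gamma^2},\quad b_2=\frac{\delta g_{r,d}\bar\gamma^2}{2\bar\gamma},$$ $$Z_1=a_1\sqrt{2\eta}\,e^{-2b_1\eta},\quad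 Z_2=\frac{a_2(1-\alpha)}{2\alpha}\ln\Big(1+b_2\frac{2\alpha}{1-\alpha}\Big),\quad Z_3=e^{\eta}Z_1,$$ $$\mathcal P_C=(1-\epsilon)(Z_1+Z_2),\qquad \mathcal P_E=\frac{\epsilon Z_3}{M-1}+\frac{\epsilon}{g_{s,d}\bar\gamma+2}.$$ Then $$\lim_{\bar\gamma\to\infty}\frac{\ln(\mathcal P_C+\mathcal P_E)}{\ln\bar\gamma}=-2,$$ i.e. the diversity order is two.
   Context: $\mathcal P_C+\mathcal P_E$ is the paper's closed-form approximate average symbol error rate of its proposed detector in a three-node SWIPT-enabled differential decode-and-forward relay network with $M$-DPSK where the relay uses time switching with ratio $\alpha$ (relay transmit power $2\delta P_sL_{s,r}|h_{s,r}|^2\alpha/(1-\alpha)$), under Rayleigh fading with all average SNRs equal to $\bar\gamma$ and unit-mean channel gains. *)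

theory Defs
  imports Complex_Main
begin

text \<open>Closed-form approximate SER of the proposed detector; all quantities are
  functions of the parameters and of the common average SNR g (= gamma bar).\<close>

definition gsd :: "nat \<Rightarrow> real \<Rightarrow> real \<Rightarrow> real" where
  "gsd M Ts Lsd = (sin (pi / real M))^2 * Ts * Lsd"

definition grd :: "nat \<Rightarrow> real \<Rightarrow> real \<Rightarrow> real \<Rightarrow> real" where
  "grd M Ts Lsr Lrd = (sin (pi / real M))^2 * Ts * Lsr * Lrd"

definition gID :: "real \<Rightarrow> real \<Rightarrow> real \<Rightarrow> real" where
  "gID Ts Lsr g = Ts * Lsr * g"

definition eps :: "nat \<Rightarrow> real \<Rightarrow> real \<Rightarrow> real \<Rightarrow> real" where
  "eps M Ts Lsr g =
     (if M = 2 then 1 / (2 * (1 + gID Ts Lsr g))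
      else 1.03 * sqrt ((1 + cos (pi / real M)) / (2 * cos (pi / real M))) *
        (1 - sqrt ((1 - cos (pi / real M)) * gID Ts Lsr g /
                   (1 + (1 - cos (pi / real M)) * gID Ts Lsr g))))"

definition eta :: "nat \<Rightarrow> real \<Rightarrow> real \<Rightarrow> real \<Rightarrow> real" where
  "eta M Ts Lsr g = ln ((1 - eps M Ts Lsr g) * (real M - 1) / eps M Ts Lsr g)"

definition SER_a1 :: "real \<Rightarrow> real \<Rightarrow> real" where
  "SER_a1 G g = sqrt pi * (2 * G) powr (-1/4) / (4 * g) * (G / 2 + 1 / g) powr (-3/4)"

definition SER_b1 :: "real \<Rightarrow> real \<Rightarrow> real" where
  "SER_b1 G g = 1/4 + sqrt (G / 2 + 1 / g) / (2 * sqrt (2 * G))"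

definition SER_a2 :: "real \<Rightarrow> real \<Rightarrow> real \<Rightarrow> real \<Rightarrow> real" where
  "SER_a2 \<delta> G R g = 2 * g / (\<delta> * R * (G * g + 2) * g^2)"

definition SER_b2 :: "real \<Rightarrow> real \<Rightarrow> real \<Rightarrow> real" where
  "SER_b2 \<delta> R g = \<delta> * R * g^2 / (2 * g)"

definition SER :: "nat \<Rightarrow> real \<Rightarrow> real \<Rightarrow> real \<Rightarrow> real \<Rightarrow> real \<Rightarrow> real \<Rightarrow> real \<Rightarrow> real" where
  "SER M Ts Lsd Lsr Lrd \<delta> \<alpha> g =
    (let G = gsd M Ts Lsd; R = grd M Ts Lsr Lrd;
         \<epsilon> = eps M Ts Lsr g; \<eta> = eta M Ts Lsr g;
         Z1 = SER_a1 G g * sqrt (2 * \<eta>) * exp (- 2 * SER_b1 G g * \<eta>);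
         Z2 = SER_a2 \<delta> G R g * (1 - \<alpha>) / (2 * \<alpha>) *
                ln (1 + SER_b2 \<delta> R g * (2 * \<alpha> / (1 - \<alpha>)));
         Z3 = exp \<eta> * Z1;
         PC = (1 - \<epsilon>) * (Z1 + Z2);
         PE = \<epsilon> * Z3 / (real M - 1) + \<epsilon> / (G * g + 2)
     in PC + PE)"

end

theory Submission imports Defs "HOL-Real_Asymp.Real_Asymp" begin


lemma one_minus_sqrt_frac:
  fixes x :: real assumes "x \<ge> 0"
  shows "1 - sqrt (x / (1 + x)) = 1 / ((1 + x) * (1 + sqrt (x / (1 + x))))"
proof -
  define s where "s = sqrt (x / (1 + x))"
  have s0: "s \<ge> 0" using assms unfolding s_def by simp
  have x1: "1 + x > 0" using assms by simp
  have "s^2 = x/(1+x)" using assms unfolding s_def by simp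
  hence "s * s * (1 + x) = x" using x1 by (simp add: power2_eq_square field_simps)
  hence "(1 - s) * ((1 + x) * (1 + s)) = 1" by (simp add: algebra_simps)
  hence "1 - s = 1 / ((1 + x) * (1 + s))" using s0 x1 by (simp add: eq_divide_eq)
  thus ?thesis unfolding s_def .
qed

lemma eps_bounds:
  assumes M: "M \<ge> 2" and Ts: "Ts > 0" and Lsr: "Lsr > 0"
  shows "\<exists>A1 A2 k. A1 > 0 \<and> A2 > 0 \<and> k > 0 \<and>
     (\<forall>g>0. A1 / (1 + k*g) \<le> eps M Ts Lsr g \<and> eps M Ts Lsr g \<le> A2 / (1 + k*g))"
proof (cases "M = 2")
  case True
  show ?thesis
    by (rule exI[of _ "1/2"], rule exI[of _ "1/2"], rule exI[of _ "Ts*Lsr"])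
       (use Ts Lsr True in \<open>auto simp: eps_def gID_def\<close>)
next
  case False
  define c where "c = cos (pi / real M)"
  have Mr: "real M \<ge> 3" using M False by auto
  have p0: "0 < pi / real M" using Mr by auto
  have p1: "pi / real M < pi / 2" using Mr by (simp add: field_simps)
  have c0: "c > 0" unfolding c_def by (rule cos_gt_zero_pi) (use p0 p1 in auto)
  have c1: "c < 1" unfolding c_def using cos_monotone_0_pi[of 0 "pi / real M"] p0 p1 by auto
  define Q where "Q = 1.03 * sqrt ((1 + c) / (2 * c))"
  have Q0: "Q > 0" unfolding Q_def using c0 by simp
  define k where "k = (1 - c) * Ts * Lsr"
  have k0: "k > 0" unfolding k_def using c1 Ts Lsr by simp
  show ?thesis
  proof (rule exI[of _ "Q/2"], rule exI[of _ Q], rule exI[of _ k], intro conjI allI impI)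
    fix g :: real assume g: "g > 0"
    define x where "x = k * g"
    have x0: "x \<ge> 0" unfolding x_def using k0 g by simp
    define s where "s = sqrt (x / (1 + x))"
    have s0: "s \<ge> 0" unfolding s_def using x0 by simp
    have s1: "s \<le> 1" unfolding s_def using x0 by simp
    have e: "eps M Ts Lsr g = Q / ((1 + x) * (1 + s))"
      unfolding eps_def using False one_minus_sqrt_frac[OF x0]
      by (simp add: Q_def c_def[symmetric] gID_def x_def k_def s_def mult.assoc)
    have "Q / ((1 + x) * 2) \<le> Q / ((1 + x) * (1 + s))"
      using Q0 x0 s0 s1 by (intro divide_left_mono mult_left_mono) auto
    thus "Q / 2 / (1 + k * g) \<le> eps M Ts Lsr g" using e x_def by (simp add: mult.commute)
    have "Q / ((1 + x) * (1 + s)) \<le> Q / ((1 + x) * 1)"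
      using Q0 x0 s0 s1 by (intro divide_left_mono mult_left_mono) auto
    thus "eps M Ts Lsr g \<le> Q / (1 + k * g)" using e x_def by simp
  qed (use Q0 k0 in auto)
qed


theorem mainTheorem4:
  fixes M :: nat and Ts Lsd Lsr Lrd \<delta> \<alpha> :: real
  assumes "M \<ge> 2"
    and "Ts > 0" and "Lsd > 0" and "Lsr > 0" and "Lrd > 0"
    and "0 < \<delta>" and "\<delta> \<le> 1"
    and "0 < \<alpha>" and "\<alpha> < 1"
  shows "((\<lambda>g. ln (SER M Ts Lsd Lsr Lrd \<delta> \<alpha> g) / ln g) \<longlongrightarrow> -2) at_top"
proof -
  note a = assms
  obtain A1 A2 k where A1: "A1 > 0" and A2: "A2 > 0" and k: "k > 0"
    and eb: "\<And>g. g > 0 \<Longrightarrow> A1 / (1 + k*g) \<le> eps M Ts Lsr g \<and> eps M Ts Lsr g \<le> A2 / (1 + k*g)"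
    using eps_bounds[OF a(1,2,4)] by blast
  have Mr: "real M \<ge> 2" using a(1) by simp
  have sn: "sin (pi / real M) > 0" using Mr by (intro sin_gt_zero) (auto simp: field_simps)
  define G where "G = gsd M Ts Lsd"
  define R where "R = grd M Ts Lsr Lrd"
  have G0: "G > 0" unfolding G_def gsd_def using sn a by simp
  have R0: "R > 0" unfolding R_def grd_def using sn a by simp
  define B where "B = A1 / (1 + k)"
  have B0: "B > 0" unfolding B_def using A1 k by simp
  define m where "m = real M - 1"
  have m1: "m \<ge> 1" unfolding m_def using Mr by simp
  define D where "D = ln (m / B)"
  define C1 where "C1 = sqrt pi * (2*G) powr (-1/4) / 4 * (G/2) powr (-3/4)"
  have C10: "C1 > 0" unfolding C1_def using G0 by simp
  define E where "E = 1 + \<delta>*R*\<alpha>/(1-\<alpha>)"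
  have E1: "E \<ge> 1" unfolding E_def using a R0 by simp
  define W0 where "W0 = 3 + 2*\<bar>D\<bar>"
  have W00: "W0 > 0" unfolding W0_def by simp
  define K where "K = 2*C1*A2/k*W0 + C1*A2/k*W0 + (1-\<alpha>)/(\<alpha>*\<delta>*R*G)*(ln E + 1) + A2/(k*G)"
  have K0: "K > 0" unfolding K_def W0_def using C10 A2 k a G0 R0 E1 ln_ge_zero[of E]
    by (intro add_nonneg_pos add_nonneg_nonneg) auto
  define c where "c = B / (G + 2)"
  have c0: "c > 0" unfolding c_def using B0 G0 by simp
  define N where "N = max 2 (2*A2/k)"
  have bound: "c / g^2 \<le> SER M Ts Lsd Lsr Lrd \<delta> \<alpha> g \<and>
               SER M Ts Lsd Lsr Lrd \<delta> \<alpha> g \<le> K * (1 + ln g) / g^2" if gN: "g \<ge> N" for g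
  proof -
    have g2: "g \<ge> 2" using gN unfolding N_def by simp
    have gk: "2*A2/k \<le> g" using gN unfolding N_def by simp
    have g0: "g > 0" using g2 by simp
    define L where "L = ln g"
    have L0: "L \<ge> 0" unfolding L_def using g2 by simp
    define e where "e = eps M Ts Lsr g"
    define \<eta> where "\<eta> = eta M Ts Lsr g"
    define Z1 where "Z1 = SER_a1 G g * sqrt (2 * \<eta>) * exp (- 2 * SER_b1 G g * \<eta>)"
    define Z2 where "Z2 = SER_a2 \<delta> G R g * (1 - \<alpha>) / (2 * \<alpha>) *
                ln (1 + SER_b2 \<delta> R g * (2 * \<alpha> / (1 - \<alpha>)))"
    define Z3 where "Z3 = exp \<eta> * Z1"
    have ser: "SER M Ts Lsd Lsr Lrd \<delta> \<alpha> g = (1-e)*(Z1+Z2) + e*Z3/m + e/(G*g+2)"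
      unfolding SER_def Let_def Z1_def Z2_def Z3_def e_def \<eta>_def m_def G_def R_def by (simp add: add.assoc)
    have e1: "A1 / (1 + k*g) \<le> e" and e2: "e \<le> A2 / (1 + k*g)" using eb[OF g0] e_def by auto
    have e0: "e > 0" using e1 A1 k g0 by (smt (verit) divide_pos_pos mult_pos_pos)
    have eup: "e \<le> A2 / (k*g)"
      using e2 A2 k g0 by (smt (verit) divide_left_mono mult_pos_pos)
    have "A2 / (k*g) \<le> 1/2" using gk k A2 g0 by (simp add: field_simps)
    hence ehalf: "e \<le> 1/2" using eup by linarith
    have "B / g \<le> A1 / (1 + k*g)" unfolding B_def using A1 k g2
      by (simp add: algebra_simps) (intro divide_left_mono, auto intro!: mult_pos_pos add_pos_pos)
    hence elo: "e \<ge> B / g" using e1 by simp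
    define r where "r = (1-e)*m/e"
    have r1: "r \<ge> 1" unfolding r_def using e0 ehalf m1 mult_right_mono[OF m1, of "1-e"] by (simp add: field_simps)
    have eta_r: "\<eta> = ln r" unfolding \<eta>_def eta_def r_def e_def m_def ..
    have eta0: "\<eta> \<ge> 0" using eta_r r1 by simp
    have expeta: "exp \<eta> = r" using eta_r r1 by simp
    have expm: "exp (-\<eta>) = e / ((1-e)*m)" using expeta e0 ehalf m1 by (simp add: exp_minus r_def)
    have h0: "1 * (1-e) \<le> m * (1-e)" using ehalf by (intro mult_right_mono[OF m1]) auto
    have h1: "1 \<le> (1-e)*m*2" using h0 ehalf by (simp add: algebra_simps)
    have h2: "(1-e)*m > 0" using ehalf m1 by simp
    have "e * 1 \<le> e * ((1-e)*m*2)" using h1 e0 by (intro mult_left_mono) auto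
    hence "e / ((1-e)*m) \<le> 2*e" using h2 by (simp add: pos_divide_le_eq algebra_simps)
    hence expm2: "exp (-\<eta>) \<le> 2*A2/(k*g)" using expm eup by simp
    have "r \<le> m / e" unfolding r_def using e0 ehalf m1 by (simp add: field_simps)
    also have "m / e \<le> m / (B/g)" using elo B0 g0 m1 e0 by (intro divide_left_mono) auto
    also have "\<dots> = (m/B) * g" by simp
    finally have "\<eta> \<le> ln ((m/B) * g)" using eta_r r1 by simp
    also have "\<dots> = D + L" unfolding D_def L_def using m1 B0 g0 ln_mult[of "m/B" g] by simp
    finally have etaup: "\<eta> \<le> \<bar>D\<bar> + L" by simp
    define S where "S = sqrt (2*\<eta>)"
    have S0: "S \<ge> 0" unfolding S_def using eta0 by simp
    have "2*\<eta> \<le> (1 + 2*\<eta>)^2" using eta0 by (simp add: power2_eq_square algebra_simps)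
    hence "S \<le> sqrt ((1 + 2*\<eta>)^2)" unfolding S_def by (rule real_sqrt_le_mono)
    hence "S \<le> 1 + 2*\<eta>" using eta0 by simp
    moreover have "2*L \<le> W0*L" unfolding W0_def using L0 by (intro mult_right_mono) auto
    ultimately have SW: "S \<le> W0 * (1 + L)" using etaup unfolding W0_def
      by (simp add: algebra_simps)
    define a1 where "a1 = SER_a1 G g"
    have p1: "(2*G) powr (-1/4) > 0" using G0 by simp
    have "G/2 + 1/g > 0" using G0 g0 by (intro add_pos_pos) auto
    hence p2: "(G/2 + 1/g) powr (-3/4) > 0" by simp
    have a10: "a1 > 0" unfolding a1_def SER_a1_def using G0 g0 p1 p2
      by (intro mult_pos_pos divide_pos_pos) auto
    have "(G/2 + 1/g) powr (-3/4) \<le> (G/2) powr (-3/4)" using G0 g0 by (intro powr_mono2') auto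
    hence a1up: "a1 \<le> C1 / g" unfolding a1_def SER_a1_def C1_def using G0 g0
      by (simp add: field_simps mult_left_mono)
    have sq: "sqrt (G/2) * 2 = sqrt (2*G)"
    proof -
      have "sqrt (G/2) * 2 = sqrt (G/2) * sqrt 4" by simp
      also have "\<dots> = sqrt (G/2*4)" by (rule real_sqrt_mult[symmetric])
      finally show ?thesis by simp
    qed
    have sq2: "sqrt (G/2) \<le> sqrt (G/2 + 1/g)" using g0 by simp
    have "sqrt (2*G) > 0" using G0 by simp
    moreover have "sqrt (2*G) \<le> 2 * sqrt (G/2 + 1/g)" using sq sq2 by linarith
    moreover have "\<And>u v::real. v > 0 \<Longrightarrow> v \<le> 2*u \<Longrightarrow> 1/4 \<le> u/(2*v)"
      by (simp add: field_simps)
    ultimately have "sqrt (G/2 + 1/g) / (2 * sqrt (2*G)) \<ge> 1/4" by blast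
    hence b1: "SER_b1 G g \<ge> 1/2" unfolding SER_b1_def by simp
    have hb: "1 * \<eta> \<le> (2*SER_b1 G g) * \<eta>" using b1 eta0 by (intro mult_right_mono) auto
    have x1: "exp (- 2 * SER_b1 G g * \<eta>) \<le> exp (-\<eta>)" using hb by simp
    have "exp \<eta> * exp (- 2 * SER_b1 G g * \<eta>) = exp (\<eta> - 2 * SER_b1 G g * \<eta>)"
      by (simp add: exp_diff[symmetric] exp_minus field_simps)
    also have "\<dots> \<le> exp 0" using hb by simp
    finally have x2: "exp \<eta> * exp (- 2 * SER_b1 G g * \<eta>) \<le> 1" by simp
    have Z1eq: "Z1 = a1 * S * exp (- 2 * SER_b1 G g * \<eta>)" unfolding Z1_def a1_def S_def ..
    have Z10: "Z1 \<ge> 0" using Z1eq a10 S0 by simp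
    have "Z1 \<le> a1 * S * exp (-\<eta>)" using Z1eq x1 a10 S0 by (simp add: mult_left_mono)
    also have "\<dots> \<le> (C1/g) * (W0*(1+L)) * (2*A2/(k*g))"
      using a1up SW expm2 a10 S0 C10 g0 L0 W00 by (intro mult_mono) (auto intro!: mult_nonneg_nonneg divide_nonneg_pos)
    also have "\<dots> = 2*C1*A2/k*W0 * (1+L) / g^2" by (simp add: power2_eq_square field_simps)
    finally have Z1up: "Z1 \<le> 2*C1*A2/k*W0 * (1+L) / g^2" .
    have "Z3 = a1 * S * (exp \<eta> * exp (- 2 * SER_b1 G g * \<eta>))" unfolding Z3_def Z1eq by simp
    also have "\<dots> \<le> a1 * S" using x2 a10 S0 by (simp add: mult_left_le)
    finally have Z3a: "Z3 \<le> a1 * S" .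
    have Z30: "Z3 \<ge> 0" unfolding Z3_def using Z10 by simp
    have "a1*S \<le> (C1/g)*(W0*(1+L))" using a1up SW a10 S0 C10 g0 by (intro mult_mono) auto
    hence Z3up: "Z3 \<le> (C1/g)*(W0*(1+L))" using Z3a by linarith
    have eZ: "e*Z3 \<ge> 0" using e0 Z30 by simp
    have "e*Z3/m \<le> e*Z3/1" using eZ m1 by (intro divide_left_mono) auto
    hence "e*Z3/m \<le> e * Z3" by simp
    also have "\<dots> \<le> (A2/(k*g)) * ((C1/g) * (W0*(1+L)))"
      using eup Z3up e0 Z30 A2 k g0 by (intro mult_mono) auto
    also have "\<dots> = C1*A2/k*W0 * (1+L) / g^2" by (simp add: power2_eq_square field_simps)
    finally have PE1: "e*Z3/m \<le> C1*A2/k*W0 * (1+L) / g^2" .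
    have b2: "SER_b2 \<delta> R g * (2 * \<alpha> / (1 - \<alpha>)) = \<delta>*R*\<alpha>/(1-\<alpha>) * g"
      unfolding SER_b2_def using g0 a by (simp add: power2_eq_square field_simps)
    define lg where "lg = ln (1 + \<delta>*R*\<alpha>/(1-\<alpha>) * g)"
    have lg0: "lg \<ge> 0" unfolding lg_def using a R0 g0 by simp
    have "1 + \<delta>*R*\<alpha>/(1-\<alpha>) * g \<le> E * g" unfolding E_def using g2 by (simp add: algebra_simps)
    moreover have q0: "\<delta>*R*\<alpha>/(1-\<alpha>) * g \<ge> 0" using a R0 g0 by simp
    ultimately have "lg \<le> ln (E*g)" unfolding lg_def using E1 g0
      by (subst ln_le_cancel_iff) auto
    also have "\<dots> = ln E + L" unfolding L_def using E1 g0 by (simp add: ln_mult)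
    also have "\<dots> \<le> (ln E + 1) * (1 + L)" using L0 ln_ge_zero[OF E1]
      by (simp add: algebra_simps)
    finally have lgup: "lg \<le> (ln E + 1) * (1 + L)" .
    define a2 where "a2 = SER_a2 \<delta> G R g"
    have a2eq: "a2 = 2 / (\<delta>*R*(G*g+2)*g)" unfolding a2_def SER_a2_def using g0
      by (simp add: power2_eq_square)
    have dp: "\<delta>*R*(G*g+2)*g > 0" using a G0 R0 g0 by (intro mult_pos_pos add_pos_pos) auto
    have dq: "\<delta>*R*G*g^2 > 0" using a G0 R0 g0 by (intro mult_pos_pos) auto
    have dl: "\<delta>*R*G*g^2 \<le> \<delta>*R*(G*g+2)*g"
    proof -
      have "\<delta>*R*G*g^2 = (\<delta>*R*g)*(G*g)" by (simp add: power2_eq_square)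
      also have "\<dots> \<le> (\<delta>*R*g)*(G*g+2)" using a R0 g0 by (intro mult_left_mono) auto
      also have "\<dots> = \<delta>*R*(G*g+2)*g" by simp
      finally show ?thesis .
    qed
    have a20: "a2 > 0" using a2eq dp by simp
    have a2up: "a2 \<le> 2 / (\<delta>*R*G*g^2)" unfolding a2eq using dq dl
      by (intro divide_left_mono) auto
    have Z2eq: "Z2 = a2 * ((1-\<alpha>)/(2*\<alpha>)) * lg" unfolding Z2_def a2_def lg_def b2 by simp
    have fa: "(1-\<alpha>)/(2*\<alpha>) > 0" using a by simp
    have Z20: "Z2 \<ge> 0" unfolding Z2eq using a20 fa lg0 by (intro mult_nonneg_nonneg) auto
    have "Z2 \<le> (2 / (\<delta>*R*G*g^2)) * ((1-\<alpha>)/(2*\<alpha>)) * ((ln E + 1) * (1 + L))"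
      unfolding Z2eq using a2up lgup a20 fa lg0 dq
      by (intro mult_mono mult_nonneg_nonneg) auto
    also have "\<dots> = (1-\<alpha>)/(\<alpha>*\<delta>*R*G)*(ln E + 1) * (1+L) / g^2"
      using a G0 R0 g0 by (simp add: field_simps)
    finally have Z2up: "Z2 \<le> (1-\<alpha>)/(\<alpha>*\<delta>*R*G)*(ln E + 1) * (1+L) / g^2" .
    have "e/(G*g+2) \<le> (A2/(k*g)) / (G*g)" using eup e0 G0 g0
      by (intro frac_le) auto
    also have "\<dots> = A2/(k*G) / g^2" by (simp add: power2_eq_square field_simps)
    also have "\<dots> \<le> A2/(k*G) * (1+L) / g^2" using L0 A2 k G0 g0
      by (simp add: divide_right_mono)
    finally have PE2: "e/(G*g+2) \<le> A2/(k*G) * (1+L) / g^2" .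
    have Kexp: "K*(1+L)/g^2 = 2*C1*A2/k*W0 * (1+L) / g^2 + C1*A2/k*W0 * (1+L) / g^2
       + (1-\<alpha>)/(\<alpha>*\<delta>*R*G)*(ln E + 1) * (1+L) / g^2 + A2/(k*G) * (1+L) / g^2"
      unfolding K_def by (simp only: distrib_right add_divide_distrib)
    have "(1-e)*(Z1+Z2) \<le> 1*(Z1 + Z2)" using e0 Z10 Z20 by (intro mult_right_mono) auto
    hence "(1-e)*(Z1+Z2) \<le> Z1 + Z2" by simp
    hence "SER M Ts Lsd Lsr Lrd \<delta> \<alpha> g \<le> K * (1 + ln g) / g^2"
      using ser Z1up Z2up PE1 PE2 Kexp unfolding L_def by linarith
    moreover have "c / g^2 \<le> SER M Ts Lsd Lsr Lrd \<delta> \<alpha> g"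
    proof -
      have "c / g^2 = B / ((G+2) * g^2)" unfolding c_def by simp
      also have "\<dots> \<le> B / (g * (G*g + 2))"
      proof (rule divide_left_mono)
        have "2*g \<le> 2*g^2" using g2 by (simp add: power2_eq_square)
        thus "g * (G*g + 2) \<le> (G+2) * g^2" by (simp add: algebra_simps power2_eq_square)
        show "0 \<le> B" using B0 by simp
        show "0 < (G+2)*g^2 * (g * (G*g + 2))" using G0 g0 by (intro mult_pos_pos add_pos_pos) auto
      qed
      also have "\<dots> = (B/g) / (G*g + 2)" by simp
      also have "\<dots> \<le> e/(G*g+2)" using elo G0 g0 by (intro divide_right_mono) auto
      also have "\<dots> \<le> SER M Ts Lsd Lsr Lrd \<delta> \<alpha> g" proof -
        have "(1-e)*(Z1+Z2) \<ge> 0" using ehalf Z10 Z20 by simp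
        moreover have "e*Z3/m \<ge> 0" using e0 Z30 m1 by simp
        ultimately show ?thesis unfolding ser by linarith
      qed
      finally show ?thesis .
    qed
    ultimately show ?thesis by simp
  qed
  show ?thesis
  proof (rule real_tendsto_sandwich)
    show "eventually (\<lambda>g. (ln c - 2 * ln g)/ln g \<le> ln (SER M Ts Lsd Lsr Lrd \<delta> \<alpha> g) / ln g) at_top"
      using eventually_ge_at_top[of N]
    proof eventually_elim
      case (elim g)
      have g2: "g \<ge> 2" using elim unfolding N_def by simp
      have lg: "ln g > 0" using g2 by simp
      have "ln c - 2 * ln g = ln (c / g^2)" using c0 g2 by (simp add: ln_div ln_realpow)
      also have "\<dots> \<le> ln (SER M Ts Lsd Lsr Lrd \<delta> \<alpha> g)" proof -
        have p: "0 < c / g^2" using c0 g2 by simp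
        have q: "c / g^2 \<le> SER M Ts Lsd Lsr Lrd \<delta> \<alpha> g" using bound[OF elim] by simp
        show ?thesis using p q by (intro ln_le_cancel_iff[THEN iffD2]) auto
      qed
      finally show ?case using lg by (simp add: divide_right_mono)
    qed
    show "eventually (\<lambda>g. ln (SER M Ts Lsd Lsr Lrd \<delta> \<alpha> g) / ln g \<le> (ln K + ln (1 + ln g) - 2 * ln g)/ln g) at_top"
      using eventually_ge_at_top[of N]
    proof eventually_elim
      case (elim g)
      have g2: "g \<ge> 2" using elim unfolding N_def by simp
      have lg: "ln g > 0" using g2 by simp
      have "0 < c / g^2" using c0 g2 by simp
      hence "ln (SER M Ts Lsd Lsr Lrd \<delta> \<alpha> g) \<le> ln (K * (1 + ln g) / g^2)"
        using bound[OF elim] by (intro ln_le_cancel_iff[THEN iffD2]) auto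
      also have "\<dots> = ln K + ln (1 + ln g) - 2 * ln g" proof -
        have l1: "1 + ln g > 0" using lg by simp
        have "ln (K * (1 + ln g) / g^2) = ln (K * (1 + ln g)) - ln (g^2)"
          using K0 l1 g2 by (intro ln_divide_pos) auto
        also have "ln (K * (1 + ln g)) = ln K + ln (1 + ln g)" using K0 l1 by (intro ln_mult_pos) auto
        also have "ln (g^2) = 2 * ln g" using g2 by (simp add: ln_realpow)
        finally show ?thesis by simp
      qed
      finally show ?case using lg by (simp add: divide_right_mono)
    qed
    show "((\<lambda>g. (ln c - 2 * ln g)/ln g) \<longlongrightarrow> -2) at_top" by real_asymp
    show "((\<lambda>g. (ln K + ln (1 + ln g) - 2 * ln g)/ln g) \<longlongrightarrow> -2) at_top" by real_asymp
  qed
qed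
end
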